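(* For any $\alpha,\beta\in\mathbb C$ with $\mathrm{Re}(\alpha+\beta)>0$ and any $\lambda_1,\lambda_2,\mu_1,\mu_2\in\mathbb R$, $$\int_{\mathbb R^2}e^{-\alpha(\lambda_1+\lambda_2-\kappa_1-\kappa_2)-\beta(\mu_1+\mu_2-\kappa_1-\kappa_2)-e^{-(\lambda_1-\kappa_1)}-e^{-(\kappa_1-\lambda_2)}-e^{-(\lambda_2-\kappa_2)}-e^{-(\mu_1-\kappa_1)}-e^{-(\kappa_1-\mu_2)}-e^{-(\mu_2-\kappa_2)}}\,d\kappa_1d\kappa_2$$ $$=\int_{\mathbb R^2}e^{-\alpha(\pi_1+\pi_2-\mu_1-\mu_2)-\beta(\pi_1+\pi_2-\lambda_1-\lambda_2)-e^{-(\pi_1-\lambda_1)}-e^{-(\lambda_1-\pi_2)}-e^{-(\pi_2-\lambda_2)}-e^{-(\pi_1-\mu_1)}-e^{-(\mu_1-\pi_2)}-e^{-(\pi_2-\mu_2)}}\,d\pi_1d\pi_2,$$ and both integrals are finite (absolutely convergent). *)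

theory Defs
  imports "HOL-Analysis.Analysis"
begin

definition LHS_integrand :: "complex \<Rightarrow> complex \<Rightarrow> real \<Rightarrow> real \<Rightarrow> real \<Rightarrow> real \<Rightarrow> real \<times> real \<Rightarrow> complex" where
  "LHS_integrand \<alpha> \<beta> l1 l2 m1 m2 = (\<lambda>(k1, k2).
     exp (- \<alpha> * complex_of_real (l1 + l2 - k1 - k2) - \<beta> * complex_of_real (m1 + m2 - k1 - k2)
          - complex_of_real (exp (-(l1 - k1)) + exp (-(k1 - l2)) + exp (-(l2 - k2))
                             + exp (-(m1 - k1)) + exp (-(k1 - m2)) + exp (-(m2 - k2)))))"

definition RHS_integrand :: "complex \<Rightarrow> complex \<Rightarrow> real \<Rightarrow> real \<Rightarrow> real \<Rightarrow> real \<Rightarrow> real \<times> real \<Rightarrow> complex" where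
  "RHS_integrand \<alpha> \<beta> l1 l2 m1 m2 = (\<lambda>(p1, p2).
     exp (- \<alpha> * complex_of_real (p1 + p2 - m1 - m2) - \<beta> * complex_of_real (p1 + p2 - l1 - l2)
          - complex_of_real (exp (-(p1 - l1)) + exp (-(l1 - p2)) + exp (-(p2 - l2))
                             + exp (-(p1 - m1)) + exp (-(m1 - p2)) + exp (-(p2 - m2)))))"

end

theory Submission imports Defs begin


lemma prod_integrable:
  fixes f g :: "real \<Rightarrow> real"
  assumes f: "integrable lborel f" and g: "integrable lborel g"
  shows "integrable (lborel \<Otimes>\<^sub>M lborel) (\<lambda>(x,y). f x * g y)"
proof (rule lborel_pair.Fubini_integrable)
  have [measurable]: "f \<in> borel_measurable borel" "g \<in> borel_measurable borel"
    using f g by auto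
  show "(\<lambda>(x,y). f x * g y) \<in> borel_measurable (lborel \<Otimes>\<^sub>M lborel)" by measurable
  show "integrable lborel (\<lambda>x. \<integral> y. norm ((\<lambda>(x,y). f x * g y) (x, y)) \<partial>lborel)"
    using f by (simp add: abs_mult integrable_abs)
  show "AE x in lborel. integrable lborel (\<lambda>y. (\<lambda>(x,y). f x * g y) (x, y))"
    using g by simp
qed

lemma refl_distr:
  fixes a :: real
  shows "distr lborel borel (\<lambda>x. a - x) = lborel"
proof -
  have "lborel = density (distr lborel borel (\<lambda>x. a + (-1) * x)) (\<lambda>_. ennreal (abs (-1)))"
    by (rule lborel_real_affine) simp
  then show ?thesis by (simp add: density_1 one_ennreal_def[symmetric])
qed

lemma T_pres:
  fixes a b :: real
  shows "distr (lborel \<Otimes>\<^sub>M lborel) (lborel \<Otimes>\<^sub>M lborel) (\<lambda>(x,y). (a - y, b - x)) = lborel \<Otimes>\<^sub>M lborel"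
proof -
  have "lborel \<Otimes>\<^sub>M lborel = distr lborel borel (\<lambda>x. a - x) \<Otimes>\<^sub>M distr lborel borel (\<lambda>x. b - x)"
    by (simp add: refl_distr)
  also have "\<dots> = distr (lborel \<Otimes>\<^sub>M lborel) (borel \<Otimes>\<^sub>M borel) (\<lambda>(x,y). (a - x, b - y))"
    by (rule pair_measure_distr) (auto simp: refl_distr intro: lborel.sigma_finite_measure_axioms)
  also have "\<dots> = distr (lborel \<Otimes>\<^sub>M lborel) (lborel \<Otimes>\<^sub>M lborel) (\<lambda>(x,y). (a - x, b - y))"
    by (rule distr_cong) (auto intro!: sets_pair_measure_cong)
  finally have 1: "lborel \<Otimes>\<^sub>M lborel = distr (lborel \<Otimes>\<^sub>M lborel) (lborel \<Otimes>\<^sub>M lborel) (\<lambda>(x::real,y::real). (a - x, b - y))" .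
  have "distr (lborel \<Otimes>\<^sub>M lborel) (lborel \<Otimes>\<^sub>M lborel) (\<lambda>(x,y). (a - y, b - x))
     = distr (distr (lborel \<Otimes>\<^sub>M lborel) (lborel \<Otimes>\<^sub>M lborel) (\<lambda>(x,y). (y, x))) (lborel \<Otimes>\<^sub>M lborel) (\<lambda>(x::real,y::real). (a - x, b - y))"
    by (subst distr_distr) (auto simp: comp_def case_prod_unfold)
  also have "\<dots> = distr (lborel \<Otimes>\<^sub>M lborel) (lborel \<Otimes>\<^sub>M lborel) (\<lambda>(x::real,y::real). (a - x, b - y))"
    by (simp add: lborel_pair.distr_pair_swap[symmetric])
  also have "\<dots> = lborel \<Otimes>\<^sub>M lborel" using 1 by simp
  finally show ?thesis .
qed


lemma exp_minus_int:
  fixes a :: real assumes "a > 0"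
  shows "integrable lborel (\<lambda>x. indicator {0..} x * exp (- a * x))"
proof -
  have "integrable lebesgue (\<lambda>x. indicat_real {0..} x *\<^sub>R exp (- a * x))" using assms
    by (intro nonnegative_absolutely_integrable_1 [unfolded set_integrable_def] integrable_on_exp_minus_to_infinity) auto
  then have "integrable (completion lborel) (\<lambda>x. indicat_real {0..} x * exp (- a * x))" by simp
  then show ?thesis by (subst (asm) integrable_completion) auto
qed

lemma exp_plus_int:
  fixes a :: real assumes "a > 0"
  shows "integrable lborel (\<lambda>x. indicator {..0} x * exp (a * x))"
proof -
  have "integrable lborel (\<lambda>x. (\<lambda>x. indicator {0..} x * exp (- a * x)) (0 + (-1) * x))"
    using exp_minus_int[OF assms] by (subst lborel_integrable_real_affine_iff) auto
  moreover have "(\<lambda>x. (\<lambda>x. indicator {0..} x * exp (- a * x)) (0 + (-1) * x)) = (\<lambda>x. indicator {..0} x * exp (a * x))"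
    by (auto simp: indicator_def fun_eq_iff)
  ultimately show ?thesis by simp
qed

lemma exp_sq_bound:
  fixes x :: real assumes "x \<ge> 0"
  shows "x^2 / 4 \<le> exp x"
proof -
  have "x / 2 \<le> exp (x/2)" using exp_ge_add_one_self[of "x/2"] by linarith
  then have "(x/2)^2 \<le> (exp (x/2))^2" using assms by (intro power_mono) auto
  also have "(exp (x/2))^2 = exp x" by (simp add: power2_eq_square exp_add[symmetric])
  finally show ?thesis by (simp add: power2_eq_square)
qed

lemma one_dim:
  fixes s c :: real assumes s: "s > 0" and c: "c > 0"
  shows "integrable lborel (\<lambda>x. exp (s * x - c * exp x))"
proof (rule Bochner_Integration.integrable_bound[OF _ _ AE_I2])
  define L where "L = (s + 1)^2 / c"
  show "integrable lborel (\<lambda>x. exp L * (indicator {0..} x * exp (- 1 * x)) + indicator {..0} x * exp (s * x))"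
    using exp_minus_int[of 1] exp_plus_int[OF s] by auto
  show "(\<lambda>x. exp (s * x - c * exp x)) \<in> borel_measurable lborel" by measurable
  fix x :: real
  show "norm (exp (s * x - c * exp x)) \<le> norm (exp L * (indicator {0..} x * exp (- 1 * x)) + indicator {..0} x * exp (s * x))"
  proof (cases "x \<ge> 0")
    case True
    have e: "c * (x^2/4) \<le> c * exp x" using exp_sq_bound[OF True] c by (intro mult_left_mono) auto
    have sq: "0 \<le> (c * x / 2 - (s+1))^2" by simp
    have "(s + 1) * x - c * (x^2/4) \<le> L"
      unfolding L_def using c sq by (simp add: field_simps power2_eq_square) 
    then have "s * x - c * exp x \<le> L + (- 1 * x)" using e by (simp add: algebra_simps)
    then have "exp (s * x - c * exp x) \<le> exp L * exp (- 1 * x)" by (simp add: exp_add[symmetric])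
    moreover have "0 \<le> indicator {..0} x * exp (s * x)" by simp
    ultimately show ?thesis using True by (smt (verit) exp_gt_zero indicator_simps(1) atLeast_iff mult_cancel_right1 norm_of_real real_norm_def)
  next
    case False
    have "s * x - c * exp x \<le> s * x" using c by simp
    then show ?thesis using False by (auto simp: indicator_def)
  qed
qed


lemma LHS_meas: "LHS_integrand \<alpha> \<beta> l1 l2 m1 m2 \<in> borel_measurable (lborel \<Otimes>\<^sub>M lborel)"
  unfolding LHS_integrand_def by measurable

lemma RHS_meas: "RHS_integrand \<alpha> \<beta> l1 l2 m1 m2 \<in> borel_measurable (lborel \<Otimes>\<^sub>M lborel)"
  unfolding RHS_integrand_def by measurable

lemma LHS_int:
  assumes "Re (\<alpha> + \<beta>) > 0"
  shows "integrable (lborel \<Otimes>\<^sub>M lborel) (LHS_integrand \<alpha> \<beta> l1 l2 m1 m2)"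
proof -
  define s where "s = Re (\<alpha> + \<beta>)"
  define A where "A = exp (-l1) + exp (-m1)"
  define C where "C = exp (-l2) + exp (-m2)"
  define K where "K = exp (- Re \<alpha> * (l1 + l2) - Re \<beta> * (m1 + m2))"
  have s: "s > 0" using assms s_def by simp
  have A: "A > 0" and C: "C > 0" unfolding A_def C_def by (auto intro: add_pos_pos)
  have i: "integrable (lborel \<Otimes>\<^sub>M lborel) (\<lambda>(x,y). (K * exp (s * x - A * exp x)) * exp (s * y - C * exp y))"
    by (rule prod_integrable) (use one_dim[OF s A] one_dim[OF s C] in auto)
  show ?thesis
  proof (rule Bochner_Integration.integrable_bound[OF i LHS_meas AE_I2])
    fix z :: "real \<times> real"
    obtain k1 k2 where z: "z = (k1, k2)" by (cases z)
    have S: "A * exp k1 + C * exp k2 \<le> exp (-(l1 - k1)) + exp (-(k1 - l2)) + exp (-(l2 - k2))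
                             + exp (-(m1 - k1)) + exp (-(k1 - m2)) + exp (-(m2 - k2))"
      unfolding A_def C_def by (simp add: algebra_simps exp_diff exp_minus field_simps add_pos_pos)
    have "norm (LHS_integrand \<alpha> \<beta> l1 l2 m1 m2 z) = exp (- Re \<alpha> * (l1 + l2 - k1 - k2) - Re \<beta> * (m1 + m2 - k1 - k2)
          - (exp (-(l1 - k1)) + exp (-(k1 - l2)) + exp (-(l2 - k2))
                             + exp (-(m1 - k1)) + exp (-(k1 - m2)) + exp (-(m2 - k2))))"
      unfolding LHS_integrand_def z by simp
    also have "\<dots> \<le> exp (- Re \<alpha> * (l1 + l2) - Re \<beta> * (m1 + m2) + (s * k1 - A * exp k1) + (s * k2 - C * exp k2))"
      using S by (simp add: s_def algebra_simps)
    also have "\<dots> = norm ((\<lambda>(x,y). (K * exp (s * x - A * exp x)) * exp (s * y - C * exp y)) z)"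
      unfolding z K_def by (simp add: exp_add)
    finally show "norm (LHS_integrand \<alpha> \<beta> l1 l2 m1 m2 z) \<le> norm ((\<lambda>(x,y). (K * exp (s * x - A * exp x)) * exp (s * y - C * exp y)) z)" .
  qed
qed


lemma pointwise:
  fixes l1 l2 m1 m2 k1 k2 :: real
  defines "A \<equiv> exp (-l1) + exp (-m1)" and "B \<equiv> exp l2 + exp m2"
      and "C \<equiv> exp (-l2) + exp (-m2)" and "D \<equiv> exp l1 + exp m1"
  shows "RHS_integrand \<alpha> \<beta> l1 l2 m1 m2 (ln D - ln C - k2, ln B - ln A - k1) = LHS_integrand \<alpha> \<beta> l1 l2 m1 m2 (k1, k2)"
proof -
  have A: "A > 0" and B: "B > 0" and C: "C > 0" and D: "D > 0"
    unfolding A_def B_def C_def D_def by (auto intro: add_pos_pos)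
  define a where "a = ln D - ln C"
  define b where "b = ln B - ln A"
  define p1 where "p1 = a - k2"
  define p2 where "p2 = b - k1"
  have ea: "exp a = D / C" unfolding a_def using C D by (simp add: exp_diff)
  have eb: "exp b = B / A" unfolding b_def using A B by (simp add: exp_diff)
  have DA: "D = A * exp (l1 + m1)" unfolding A_def D_def by (simp add: algebra_simps exp_add exp_minus)
  have CB: "C = B * exp (- (l2 + m2))" unfolding B_def C_def by (simp add: distrib_right exp_add[symmetric])
  have lnD: "ln D = ln A + (l1 + m1)" using DA A by (simp add: ln_mult)
  have lnC: "ln C = ln B - (l2 + m2)" using CB B by (simp add: ln_mult)
  have ab: "a + b = l1 + l2 + m1 + m2" unfolding a_def b_def lnD lnC by simp
  have e1: "exp (-(p1 - l1)) + exp (-(p1 - m1)) = exp (-(l2 - k2)) + exp (-(m2 - k2))"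
  proof -
    have "exp (-(p1 - l1)) + exp (-(p1 - m1)) = exp k2 * D / exp a"
      unfolding p1_def D_def by (simp add: exp_diff exp_add exp_minus field_simps)
    also have "\<dots> = exp k2 * C" using ea C D by simp
    also have "\<dots> = exp (-(l2 - k2)) + exp (-(m2 - k2))" unfolding C_def by (simp add: exp_diff exp_minus field_simps)
    finally show ?thesis .
  qed
  have e2: "exp (-(l1 - p2)) + exp (-(m1 - p2)) = exp (-(k1 - l2)) + exp (-(k1 - m2))"
  proof -
    have "exp (-(l1 - p2)) + exp (-(m1 - p2)) = exp b * A / exp k1"
      unfolding p2_def A_def by (simp add: exp_diff exp_add exp_minus field_simps)
    also have "\<dots> = B / exp k1" using eb A by simp
    also have "\<dots> = exp (-(k1 - l2)) + exp (-(k1 - m2))" unfolding B_def by (simp add: exp_diff exp_minus field_simps)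
    finally show ?thesis .
  qed
  have e3: "exp (-(p2 - l2)) + exp (-(p2 - m2)) = exp (-(l1 - k1)) + exp (-(m1 - k1))"
  proof -
    have "exp (-(p2 - l2)) + exp (-(p2 - m2)) = exp k1 * B / exp b"
      unfolding p2_def B_def by (simp add: exp_diff exp_add exp_minus field_simps)
    also have "\<dots> = exp k1 * A" using eb A B by simp
    also have "\<dots> = exp (-(l1 - k1)) + exp (-(m1 - k1))" unfolding A_def by (simp add: exp_diff exp_minus field_simps)
    finally show ?thesis .
  qed
  have Seq: "exp (-(p1 - l1)) + exp (-(l1 - p2)) + exp (-(p2 - l2))
                             + exp (-(p1 - m1)) + exp (-(m1 - p2)) + exp (-(p2 - m2))
     = exp (-(l1 - k1)) + exp (-(k1 - l2)) + exp (-(l2 - k2))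
                             + exp (-(m1 - k1)) + exp (-(k1 - m2)) + exp (-(m2 - k2))"
    using e1 e2 e3 by linarith
  have L1: "p1 + p2 - m1 - m2 = l1 + l2 - k1 - k2" unfolding p1_def p2_def using ab by linarith
  have L2: "p1 + p2 - l1 - l2 = m1 + m2 - k1 - k2" unfolding p1_def p2_def using ab by linarith
  have "RHS_integrand \<alpha> \<beta> l1 l2 m1 m2 (p1, p2) = LHS_integrand \<alpha> \<beta> l1 l2 m1 m2 (k1, k2)"
    unfolding RHS_integrand_def LHS_integrand_def by (simp only: case_prod_conv L1 L2 Seq)
  then show ?thesis unfolding p1_def p2_def a_def b_def .
qed

theorem lemma3p5:
  fixes \<alpha> \<beta> :: complex and l1 l2 m1 m2 :: real
  assumes "Re (\<alpha> + \<beta>) > 0"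
  shows "integrable (lborel \<Otimes>\<^sub>M lborel) (LHS_integrand \<alpha> \<beta> l1 l2 m1 m2)
    \<and> integrable (lborel \<Otimes>\<^sub>M lborel) (RHS_integrand \<alpha> \<beta> l1 l2 m1 m2)
    \<and> (\<integral>x. LHS_integrand \<alpha> \<beta> l1 l2 m1 m2 x \<partial>(lborel \<Otimes>\<^sub>M lborel))
       = (\<integral>x. RHS_integrand \<alpha> \<beta> l1 l2 m1 m2 x \<partial>(lborel \<Otimes>\<^sub>M lborel))"
proof -
  define a where "a = ln (exp l1 + exp m1) - ln (exp (-l2) + exp (-m2))"
  define b where "b = ln (exp l2 + exp m2) - ln (exp (-l1) + exp (-m1))"
  define T :: "real \<times> real \<Rightarrow> real \<times> real" where "T = (\<lambda>(x,y). (a - y, b - x))"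
  let ?M = "lborel \<Otimes>\<^sub>M lborel :: (real \<times> real) measure"
  have Tm: "T \<in> measurable ?M ?M" unfolding T_def by measurable
  have pres: "distr ?M ?M T = ?M" unfolding T_def by (rule T_pres)
  have pw: "RHS_integrand \<alpha> \<beta> l1 l2 m1 m2 (T z) = LHS_integrand \<alpha> \<beta> l1 l2 m1 m2 z" for z
    by (cases z) (simp add: T_def a_def b_def pointwise)
  have iL: "integrable ?M (LHS_integrand \<alpha> \<beta> l1 l2 m1 m2)" using LHS_int[OF assms] .
  have "integrable (distr ?M ?M T) (RHS_integrand \<alpha> \<beta> l1 l2 m1 m2)"
    using iL by (subst integrable_distr_eq[OF Tm RHS_meas]) (simp add: pw)
  then have iR: "integrable ?M (RHS_integrand \<alpha> \<beta> l1 l2 m1 m2)" using pres by simp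
  have "(\<integral>x. RHS_integrand \<alpha> \<beta> l1 l2 m1 m2 x \<partial>?M) = (\<integral>x. RHS_integrand \<alpha> \<beta> l1 l2 m1 m2 x \<partial>(distr ?M ?M T))"
    using pres by simp
  also have "\<dots> = (\<integral>x. LHS_integrand \<alpha> \<beta> l1 l2 m1 m2 x \<partial>?M)"
    by (subst integral_distr[OF Tm RHS_meas]) (simp add: pw)
  finally show ?thesis using iL iR by simp
qed

end
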